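(* Let $\boldsymbol W'$ be the set of control pairs $(\boldsymbol u,\boldsymbol v)$ such that $$\int_0^T\sum_{m=1}^M\Big\{g_m\,b_m(u_m(t))+\alpha\, v_m(t)\,\beta(t)\,c_m(v_m(t))\,\bar i_m(t)\,\bar s(t)\Big\}\,dt=B,$$ where $g_m=\sum_{k\in\mathbb K_m}p_k$, $\bar i_m(t)=\sum_{k\in\mathbb K_m}k\,i_k(t)\,p_k$, $\bar s(t)=\sum_{k\in\mathbb K}(kp_k/\bar k)(1-i_k(t))$, and $(i_k)_{k\in\mathbb K}$ is the solution of the initial value problem $$\dot i_k(t)=\beta(t)(1-i_k(t))\,k\sum_{p=1}^M\sum_{l\in\mathbb K_p}q_l\,i_l(t)\,\alpha(1+v_p(t))+u_m(t)(1-i_k(t)),\ k\in\mathbb K_m,\qquad i_k(0)=i_0,$$ driven by $(\boldsymbol u,\boldsymbol v)$. Then the set $\boldsymbol W=\boldsymbol W'\cap(\boldsymbol U\times\boldsymbol V)$ is compact (with respect to the uniform topology on each component).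
   Context: Let $\mathbb K=\{K_{min},\dots,K_{max}\}$ be a finite set of positive integers, partitioned into $M\ge1$ groups of consecutive integers $\mathbb K_m=\{\tilde k_{m-1}+1,\dots,\tilde k_m\}$ with $K_{min}-1=\tilde k_0<\dots<\tilde k_M=K_{max}$. Let $(p_k)_{k\in\mathbb K}$ be a probability distribution on $\mathbb K$ with mean $\bar k=\sum_k kp_k$, and $q_k=(k+1)p_{k+1}/\bar k$ ($p_{K_{max}+1}=0$). Fix $T>0$, $i_0\in[0,1]$, $B>0$, $\alpha\in(0,1]$, $u_{max}>0$, $v_{max}\ge0$ with $\alpha(1+v_{max})\le1$, and a nonnegative spreading-rate function $\beta:[0,T]\to[0,\beta_{max}]$. For each $m$, $b_m,c_m:[0,\infty)\to[0,\infty)$ are continuous, nonnegative, increasing cost functions. Fix $C_\Psi:(0,\infty)\to[0,\infty)$ with $C_\Psi(\epsilon)\to0$ as $\epsilon\to0$, and let $\Psi$ be the set of real functions $\sigma$ on $[0,T]$ with $|\sigma(t)-\sigma(\hat t)|\le C_\Psi(\epsilon)$ whenever $|t-\hat t|\le\epsilon$. Let $U_m=\{\sigma\in\Psi:0\le\sigma\le u_{max}\}$, $V_m=\{\sigma\in\Psi:0\le\sigma\le v_{max}\}$, $\boldsymbol U=\prod_{m=1}^MU_m$, $\boldsymbol V=\prod_{m=1}^MV_m$, with $\boldsymbol u=(u_1,\dots,u_M)$, $\boldsymbol v=(v_1,\dots,v_M)$. *)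

theory Defs
  imports "HOL-Analysis.Analysis"
begin

definition grp :: "(nat \<Rightarrow> nat) \<Rightarrow> nat \<Rightarrow> nat set" where
  "grp kt m = {kt (m - 1) + 1 .. kt m}"

definition kbar :: "(nat \<Rightarrow> real) \<Rightarrow> nat \<Rightarrow> nat \<Rightarrow> real" where
  "kbar p Kmin Kmax = (\<Sum>k\<in>{Kmin..Kmax}. real k * p k)"

definition qq :: "(nat \<Rightarrow> real) \<Rightarrow> nat \<Rightarrow> nat \<Rightarrow> nat \<Rightarrow> real" where
  "qq p Kmin Kmax l = (if l + 1 \<le> Kmax then real (l + 1) * p (l + 1) / kbar p Kmin Kmax else 0)"

definition Psi :: "real \<Rightarrow> (real \<Rightarrow> real) \<Rightarrow> (real \<Rightarrow> real) set" where
  "Psi T CP = {\<sigma>. \<forall>t\<in>{0..T}. \<forall>s\<in>{0..T}. \<forall>\<epsilon>>0. \<bar>t - s\<bar> \<le> \<epsilon> \<longrightarrow> \<bar>\<sigma> t - \<sigma> s\<bar> \<le> CP \<epsilon>}"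

definition Ctrl :: "real \<Rightarrow> (real \<Rightarrow> real) \<Rightarrow> nat \<Rightarrow> real \<Rightarrow> (nat \<Rightarrow> real \<Rightarrow> real) set" where
  "Ctrl T CP M bnd = {u. \<forall>m\<in>{1..M}. u m \<in> Psi T CP \<and> (\<forall>t\<in>{0..T}. 0 \<le> u m t \<and> u m t \<le> bnd)}"

text \<open>i solves the initial value problem (integral / Caratheodory form) on [0,T].\<close>
definition is_solution ::
  "(nat \<Rightarrow> nat) \<Rightarrow> nat \<Rightarrow> nat \<Rightarrow> nat \<Rightarrow> (nat \<Rightarrow> real) \<Rightarrow> (real \<Rightarrow> real) \<Rightarrow> real \<Rightarrow> real \<Rightarrow> real
   \<Rightarrow> (nat \<Rightarrow> real \<Rightarrow> real) \<Rightarrow> (nat \<Rightarrow> real \<Rightarrow> real) \<Rightarrow> (nat \<Rightarrow> real \<Rightarrow> real) \<Rightarrow> bool" where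
  "is_solution kt M Kmin Kmax p \<beta> \<alpha> i0 T u v i \<longleftrightarrow>
     (\<forall>m\<in>{1..M}. \<forall>k\<in>grp kt m. \<forall>t\<in>{0..T}.
        ((\<lambda>s. \<beta> s * (1 - i k s) * real k *
               (\<Sum>pp\<in>{1..M}. \<Sum>l\<in>grp kt pp. qq p Kmin Kmax l * i l s * (\<alpha> * (1 + v pp s)))
             + u m s * (1 - i k s))
          has_integral (i k t - i0)) {0..t})"

definition cost_integrand ::
  "(nat \<Rightarrow> nat) \<Rightarrow> nat \<Rightarrow> nat \<Rightarrow> nat \<Rightarrow> (nat \<Rightarrow> real) \<Rightarrow> (real \<Rightarrow> real) \<Rightarrow> real
   \<Rightarrow> (nat \<Rightarrow> real \<Rightarrow> real) \<Rightarrow> (nat \<Rightarrow> real \<Rightarrow> real)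
   \<Rightarrow> (nat \<Rightarrow> real \<Rightarrow> real) \<Rightarrow> (nat \<Rightarrow> real \<Rightarrow> real) \<Rightarrow> (nat \<Rightarrow> real \<Rightarrow> real) \<Rightarrow> real \<Rightarrow> real" where
  "cost_integrand kt M Kmin Kmax p \<beta> \<alpha> b c u v i t =
     (\<Sum>m\<in>{1..M}.
        (\<Sum>k\<in>grp kt m. p k) * b m (u m t)
        + \<alpha> * v m t * \<beta> t * c m (v m t)
          * (\<Sum>k\<in>grp kt m. real k * i k t * p k)
          * (\<Sum>k\<in>{Kmin..Kmax}. real k * p k / kbar p Kmin Kmax * (1 - i k t)))"

definition Wset ::
  "(nat \<Rightarrow> nat) \<Rightarrow> nat \<Rightarrow> nat \<Rightarrow> nat \<Rightarrow> (nat \<Rightarrow> real) \<Rightarrow> (real \<Rightarrow> real) \<Rightarrow> real \<Rightarrow> real \<Rightarrow> real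
   \<Rightarrow> real \<Rightarrow> (real \<Rightarrow> real) \<Rightarrow> real \<Rightarrow> real
   \<Rightarrow> (nat \<Rightarrow> real \<Rightarrow> real) \<Rightarrow> (nat \<Rightarrow> real \<Rightarrow> real)
   \<Rightarrow> ((nat \<Rightarrow> real \<Rightarrow> real) \<times> (nat \<Rightarrow> real \<Rightarrow> real)) set" where
  "Wset kt M Kmin Kmax p \<beta> \<alpha> i0 T B CP umax vmax b c =
     {(u, v). u \<in> Ctrl T CP M umax \<and> v \<in> Ctrl T CP M vmax \<and>
        (\<exists>i. is_solution kt M Kmin Kmax p \<beta> \<alpha> i0 T u v i \<and>
             (cost_integrand kt M Kmin Kmax p \<beta> \<alpha> b c u v i has_integral B) {0..T})}"

end

theory Submission
  imports Defs "HOL-Complex_Analysis.Great_Picard"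
begin


lemma hi_ulim:
  fixes f :: "nat \<Rightarrow> real \<Rightarrow> real"
  assumes fi: "\<And>n. (f n has_integral I n) {a..b}"
    and u: "uniform_limit {a..b} f g sequentially" and IJ: "I \<longlonglongrightarrow> J" and ab: "a \<le> b"
  shows "(g has_integral J) {a..b}"
proof -
  have gi: "g integrable_on {a..b}"
  proof (rule integrable_uniform_limit_real)
    fix e :: real assume e: "e > 0"
    from uniform_limitD[OF u e] obtain N where "\<And>n. n \<ge> N \<Longrightarrow> \<forall>x\<in>{a..b}. dist (f n x) (g x) < e"
      unfolding eventually_sequentially by blast
    then have n: "\<forall>x\<in>{a..b}. dist (f N x) (g x) < e" by blast
    then show "\<exists>h. (\<forall>x\<in>{a..b}. norm (g x - h x) \<le> e) \<and> h integrable_on {a..b}"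
      using fi[of N] n by (intro exI[of _ "f N"]) (auto simp: dist_real_def abs_minus_commute less_imp_le)
  qed
  have "I \<longlonglongrightarrow> integral {a..b} g"
  proof (rule LIMSEQ_I)
    fix r :: real assume r: "r > 0"
    define e where "e = r / (b - a + 1)"
    have e: "e > 0" using r ab by (simp add: e_def)
    from uniform_limitD[OF u e] obtain N where N: "\<And>n. n \<ge> N \<Longrightarrow> \<forall>x\<in>{a..b}. dist (f n x) (g x) < e"
      unfolding eventually_sequentially by blast
    show "\<exists>N. \<forall>n\<ge>N. norm (I n - integral {a..b} g) < r"
    proof (intro exI allI impI)
      fix n assume "n \<ge> N"
      have d: "((\<lambda>x. f n x - g x) has_integral (I n - integral {a..b} g)) {a..b}"
        using fi[of n] gi by (intro has_integral_diff) auto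
      have d': "((\<lambda>x. f n x - g x) has_integral (I n - integral {a..b} g)) (cbox a b)"
        using d by simp
      have "norm (I n - integral {a..b} g) \<le> e * (b - a)"
        using has_integral_bound[OF _ d', of e] N[OF \<open>n \<ge> N\<close>] e ab
        by (auto simp: dist_real_def less_imp_le)
      also have "\<dots> < r" using r ab e by (simp add: e_def field_simps)
      finally show "norm (I n - integral {a..b} g) < r" .
    qed
  qed
  then have "J = integral {a..b} g" using IJ LIMSEQ_unique by blast
  then show ?thesis using gi by (simp add: integrable_integral)
qed



lemma AA_multi:
  fixes F :: "'j \<Rightarrow> nat \<Rightarrow> real \<Rightarrow> real"
  assumes "finite J"
  shows "compact S \<Longrightarrow> (\<forall>j\<in>J. \<forall>n x. x\<in>S \<longrightarrow> \<bar>F j n x\<bar> \<le> Bd) \<Longrightarrow>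
    (\<forall>j\<in>J. \<forall>x\<in>S. \<forall>e>0. \<exists>d>0. \<forall>n y. y\<in>S \<and> \<bar>x - y\<bar> < d \<longrightarrow> \<bar>F j n x - F j n y\<bar> < e) \<Longrightarrow>
    \<exists>r. strict_mono r \<and> (\<forall>j\<in>J. \<exists>g. uniform_limit S (\<lambda>n. F j (r n)) g sequentially)"
  using assms
proof (induction J rule: finite_induct)
  case empty
  then show ?case using strict_mono_id by blast
next
  case (insert j J)
  then obtain r where r: "strict_mono r" and lim: "\<forall>j\<in>J. \<exists>g. uniform_limit S (\<lambda>n. F j (r n)) g sequentially"
    by auto
  obtain g k where "continuous_on S g" and k: "strict_mono (k :: nat \<Rightarrow> nat)"
    and conv: "\<And>e. 0 < e \<Longrightarrow> \<exists>N. \<forall>n x. n \<ge> N \<and> x \<in> S \<longrightarrow> norm(F j (r (k n)) x - g x) < e"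
  proof (rule Arzela_Ascoli[of S "\<lambda>n. F j (r n)" Bd])
    show "compact S" by fact
    show "\<And>n x. x \<in> S \<Longrightarrow> norm (F j (r n) x) \<le> Bd" using insert.prems by auto
    show "\<And>x e. x \<in> S \<Longrightarrow> 0 < e \<Longrightarrow> \<exists>d>0. \<forall>n y. y \<in> S \<and> norm (x - y) < d \<longrightarrow> norm (F j (r n) x - F j (r n) y) < e"
    proof -
      fix x e assume "x \<in> S" "(0::real) < e"
      then obtain d where "d > 0" "\<forall>n y. y\<in>S \<and> \<bar>x - y\<bar> < d \<longrightarrow> \<bar>F j n x - F j n y\<bar> < e"
        using insert.prems(3) by blast
      then show "\<exists>d>0. \<forall>n y. y \<in> S \<and> norm (x - y) < d \<longrightarrow> norm (F j (r n) x - F j (r n) y) < e"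
        by (auto simp: real_norm_def)
    qed
  qed auto
  have "uniform_limit S (\<lambda>n. F j (r (k n))) g sequentially"
    unfolding uniform_limit_sequentially_iff dist_norm using conv by blast
  moreover have "\<exists>g. uniform_limit S (\<lambda>n. F j' (r (k n))) g sequentially" if jJ: "j' \<in> J" for j'
  proof -
    obtain g' where "uniform_limit S (\<lambda>n. F j' (r n)) g' sequentially" by (rule exE[OF bspec[OF lim jJ]])
    from filterlim_compose[OF this filterlim_subseq[OF k]]
    show ?thesis by (auto simp: o_def)
  qed
  moreover have "strict_mono (r \<circ> k)" using r k by (simp add: strict_mono_def)
  ultimately show ?case by (intro exI[of _ "r \<circ> k"]) (auto simp: o_def)
qed



definition ULb :: "real set \<Rightarrow> (nat \<Rightarrow> real \<Rightarrow> real) \<Rightarrow> (real \<Rightarrow> real) \<Rightarrow> bool" where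
  "ULb S f l \<longleftrightarrow> uniform_limit S f l sequentially \<and> bounded (l ` S)"

lemma ULb_add: "ULb S f l \<Longrightarrow> ULb S g m \<Longrightarrow> ULb S (\<lambda>n s. f n s + g n s) (\<lambda>s. l s + m s)"
  unfolding ULb_def by (auto intro: uniform_limit_add bounded_plus_comp)

lemma ULb_diff: "ULb S f l \<Longrightarrow> ULb S g m \<Longrightarrow> ULb S (\<lambda>n s. f n s - g n s) (\<lambda>s. l s - m s)"
  unfolding ULb_def by (auto intro: uniform_limit_minus bounded_minus_comp)

lemma bounded_mult_comp_real:
  fixes l m :: "real \<Rightarrow> real"
  assumes "bounded (l ` S)" "bounded (m ` S)" shows "bounded ((\<lambda>s. l s * m s) ` S)"
proof -
  obtain A where A: "\<forall>x\<in>S. \<bar>l x\<bar> \<le> A" using assms(1) by (auto simp: bounded_real)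
  obtain B where B: "\<forall>x\<in>S. \<bar>m x\<bar> \<le> B" using assms(2) by (auto simp: bounded_real)
  have "\<forall>x\<in>S. \<bar>l x * m x\<bar> \<le> A * B"
    using A B by (auto simp: abs_mult intro: mult_mono')
  then show ?thesis by (auto simp: bounded_real)
qed

lemma ULb_mult: "ULb S f l \<Longrightarrow> ULb S g m \<Longrightarrow> ULb S (\<lambda>n s. f n s * g n s) (\<lambda>s. l s * m s)"
  unfolding ULb_def by (auto intro: uniform_lim_mult bounded_mult_comp_real)

lemma ULb_const: "bounded (h ` S) \<Longrightarrow> ULb S (\<lambda>n s. h s) (\<lambda>s. h s)"
  unfolding ULb_def by (auto intro: uniform_limit_const)

lemma ULb_constc: "ULb S (\<lambda>n s. c) (\<lambda>s. c)"
  unfolding ULb_def by (auto intro: uniform_limit_const bounded_subset[of "{c}"])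

lemma ULb_sum:
  assumes "\<And>a. a \<in> A \<Longrightarrow> ULb S (\<lambda>n s. f a n s) (\<lambda>s. l a s)"
  shows "ULb S (\<lambda>n s. \<Sum>a\<in>A. f a n s) (\<lambda>s. \<Sum>a\<in>A. l a s)"
proof (cases "finite A")
  case True
  then show ?thesis using assms
  proof (induction A rule: finite_induct)
    case empty then show ?case using ULb_constc[of S 0] by simp
  next
    case (insert a A)
    then show ?case using ULb_add[of S "\<lambda>n s. f a n s" "\<lambda>s. l a s" "\<lambda>n s. \<Sum>a\<in>A. f a n s" "\<lambda>s. \<Sum>a\<in>A. l a s"]
      by simp
  qed
next
  case False then show ?thesis using ULb_constc[of S 0] by simp
qed

lemma ULb_subset: "ULb S f l \<Longrightarrow> S' \<subseteq> S \<Longrightarrow> uniform_limit S' f l sequentially"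
  unfolding ULb_def by (auto intro: uniform_limit_on_subset)

lemma ULb_base:
  assumes "uniform_limit S f l sequentially" "\<And>n x. x \<in> S \<Longrightarrow> \<bar>f n x\<bar> \<le> Bd"
  shows "ULb S f l"
proof -
  have "\<bar>l x\<bar> \<le> Bd" if "x \<in> S" for x
  proof -
    have lim: "(\<lambda>n. \<bar>f n x\<bar>) \<longlonglongrightarrow> \<bar>l x\<bar>" using tendsto_uniform_limitI[OF assms(1) that] by (intro tendsto_intros)
    have ev: "eventually (\<lambda>n. \<bar>f n x\<bar> \<le> Bd) sequentially"
      by (intro always_eventually allI assms(2)[OF that])
    show ?thesis by (rule tendsto_upperbound[OF lim ev]) simp
  qed
  then show ?thesis using assms(1) unfolding ULb_def by (auto simp: bounded_real)
qed

lemma ULb_comp: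
  fixes a b :: real
  assumes u: "uniform_limit S f l sequentially" and h: "continuous_on {a..b} h"
    and fin: "\<And>n x. x \<in> S \<Longrightarrow> f n x \<in> {a..b}"
  shows "ULb S (\<lambda>n s. h (f n s)) (\<lambda>s. h (l s))"
proof -
  have uc: "uniformly_continuous_on {a..b} h" by (rule compact_uniformly_continuous[OF h compact_Icc])
  have ul: "uniform_limit S (\<lambda>n s. h (f n s)) (\<lambda>s. h (l s)) sequentially"
    by (rule uniform_limit_compose_uniformly_continuous_on[OF u uc]) (use fin in \<open>auto intro!: always_eventually simp: closed_atLeastAtMost\<close>)
  have lin: "l x \<in> {a..b}" if "x \<in> S" for x
  proof -
    have t: "(\<lambda>n. f n x) \<longlonglongrightarrow> l x" using tendsto_uniform_limitI[OF u that] .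
    have ev1: "eventually (\<lambda>n. a \<le> f n x) sequentially"
      by (intro always_eventually allI) (use fin[OF that] in auto)
    have ev2: "eventually (\<lambda>n. f n x \<le> b) sequentially"
      by (intro always_eventually allI) (use fin[OF that] in auto)
    have "a \<le> l x" by (rule tendsto_lowerbound[OF t ev1]) simp
    moreover have "l x \<le> b" by (rule tendsto_upperbound[OF t ev2]) simp
    ultimately show ?thesis by simp
  qed
  have "bounded (h ` {a..b})" using compact_continuous_image[OF h compact_Icc] compact_imp_bounded by blast
  then have "bounded ((\<lambda>s. h (l s)) ` S)" by (rule bounded_subset) (use lin in auto)
  then show ?thesis using ul unfolding ULb_def by auto
qed



lemma sign_lemma:
  fixes y g :: "'k \<Rightarrow> real \<Rightarrow> real" and P :: "'k set"
  assumes fin: "finite P" and ab: "a \<le> b" and C: "C \<ge> 0"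
    and cont: "\<And>k. k\<in>P \<Longrightarrow> continuous_on {a..b} (y k)"
    and init: "\<And>k. k\<in>P \<Longrightarrow> y k a \<ge> 0"
    and int: "\<And>k s r. k\<in>P \<Longrightarrow> a \<le> s \<Longrightarrow> s \<le> r \<Longrightarrow> r \<le> b \<Longrightarrow> (g k has_integral (y k r - y k s)) {s..r}"
    and bnd: "\<And>k s. k\<in>P \<Longrightarrow> s\<in>{a..b} \<Longrightarrow> y k s \<le> 0 \<Longrightarrow> g k s \<ge> - C * (\<Sum>j\<in>P. max 0 (- y j s))"
  shows "\<And>k t. k\<in>P \<Longrightarrow> t\<in>{a..b} \<Longrightarrow> y k t \<ge> 0"
proof -
  define N where "N s = (\<Sum>j\<in>P. max 0 (- y j s))" for s
  define \<delta> where "\<delta> = 1 / (2 * (real (card P) * C + 1))"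
  have cpos: "real (card P) * C \<ge> 0" using C by simp
  have \<delta>: "\<delta> > 0" using cpos by (simp add: \<delta>_def)
  have cd: "real (card P) * C * \<delta> \<le> 1/2"
    using cpos by (simp add: \<delta>_def field_simps)
  have Nnn: "N s \<ge> 0" for s unfolding N_def by (intro sum_nonneg) auto
  have step: "\<forall>k\<in>P. \<forall>r\<in>{s0..min b (s0+\<delta>)}. y k r \<ge> 0"
    if s0: "s0 \<in> {a..b}" and h0: "\<forall>k\<in>P. y k s0 \<ge> 0" for s0
  proof -
    define e where "e = min b (s0+\<delta>)"
    have se: "s0 \<le> e" using s0 \<delta> by (simp add: e_def)
    have sub: "{s0..e} \<subseteq> {a..b}" using s0 by (auto simp: e_def)
    have contN: "continuous_on {s0..e} N"
      unfolding N_def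
      by (intro continuous_intros continuous_on_subset[OF cont sub]) 
    obtain x where x: "x \<in> {s0..e}" and xmax: "\<forall>r\<in>{s0..e}. N r \<le> N x"
      using continuous_attains_sup[OF compact_Icc _ contN] se by auto
    define Mx where "Mx = N x"
    have Mx0: "Mx \<ge> 0" using Nnn by (simp add: Mx_def)
    have each: "max 0 (- y k r) \<le> C * \<delta> * Mx" if k: "k \<in> P" and r: "r \<in> {s0..e}" for k r
    proof (cases "y k r \<ge> 0")
      case True then show ?thesis using C \<delta> Mx0 by simp
    next
      case False
      then have ykr: "y k r < 0" by simp
      define Z where "Z = {s\<in>{s0..r}. 0 \<le> y k s}"
      have contk: "continuous_on {s0..r} (y k)"
        using continuous_on_subset[OF cont[OF k]] sub r by auto
      have "closed Z" unfolding Z_def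
        by (intro continuous_on_closed_Collect_le contk continuous_on_const closed_atLeastAtMost)
      moreover have "bounded Z" by (rule bounded_subset[of "{s0..r}"]) (auto simp: Z_def)
      ultimately have "compact Z" by (simp add: compact_eq_bounded_closed)
      moreover have "Z \<noteq> {}" using h0 k r unfolding Z_def by auto
      ultimately obtain c where cZ: "c \<in> Z" and cmax: "\<forall>z\<in>Z. z \<le> c"
        using compact_attains_sup by blast
      have cr: "s0 \<le> c" "c \<le> r" using cZ by (auto simp: Z_def)
      have yc0: "y k c \<ge> 0" using cZ by (auto simp: Z_def)
      have yc: "y k c = 0"
      proof (rule ccontr)
        assume "y k c \<noteq> 0"
        then have "y k c > 0" using yc0 by simp
        have "continuous_on {c..r} (y k)" using continuous_on_subset[OF contk] cr by auto
        then obtain x' where x': "c \<le> x'" "x' \<le> r" "y k x' = 0"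
          using IVT2'[of "y k" r 0 c] ykr \<open>y k c > 0\<close> cr by auto
        then have "x' \<in> Z" using cr by (auto simp: Z_def)
        then have "x' = c" using cmax x' by force
        then show False using x' \<open>y k c > 0\<close> by simp
      qed
      have neg: "y k s \<le> 0" if "s \<in> {c..r}" for s
      proof (rule ccontr)
        assume "\<not> y k s \<le> 0"
        then have "s \<in> Z" using that cr by (auto simp: Z_def)
        then have "s \<le> c" using cmax by blast
        then have "s = c" using that by simp
        then show False using \<open>\<not> y k s \<le> 0\<close> yc by simp
      qed
      have gi: "(g k has_integral (y k r - y k c)) {c..r}"
        using int[OF k] cr s0 r sub by (meson atLeastAtMost_iff order_trans subsetD) 
      have le: "- C * Mx \<le> g k s" if s: "s \<in> {c..r}" for s
      proof -
        have sS: "s \<in> {s0..e}" using s cr r by auto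
        have "- C * Mx \<le> - C * N s" using xmax sS C by (simp add: Mx_def mult_left_mono)
        also have "\<dots> \<le> g k s" using bnd[OF k _ neg[OF s]] sS sub unfolding N_def by auto
        finally show ?thesis .
      qed
      have "measure lborel {c..r} *\<^sub>R (- C * Mx) \<le> y k r - y k c"
        by (rule has_integral_le[OF has_integral_const_real gi]) (use le in auto)
      then have "- C * Mx * (r - c) \<le> y k r" using cr yc by (simp add: algebra_simps)
      moreover have "r - c \<le> \<delta>" using cr r by (auto simp: e_def)
      moreover have "C * Mx * (r - c) \<le> C * Mx * \<delta>"
        using \<open>r - c \<le> \<delta>\<close> C Mx0 by (simp add: mult_left_mono)
      ultimately show ?thesis using ykr by (simp add: algebra_simps)
    qed
    have Nr: "N r \<le> Mx / 2" if r: "r \<in> {s0..e}" for r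
    proof -
      have "N r \<le> real (card P) * (C * \<delta> * Mx)"
        unfolding N_def by (rule sum_bounded_above) (use each r in auto)
      also have "\<dots> = (real (card P) * C * \<delta>) * Mx" by simp
      also have "\<dots> \<le> (1/2) * Mx" using cd Mx0 by (rule mult_right_mono)
      finally show ?thesis by simp
    qed
    have "Mx \<le> Mx / 2" using Nr[OF x] by (simp add: Mx_def)
    then have M0: "Mx \<le> 0" by simp
    show ?thesis
    proof (intro ballI)
      fix k r assume k: "k \<in> P" and r: "r \<in> {s0..min b (s0+\<delta>)}"
      have "max 0 (- y k r) \<le> N r"
        unfolding N_def by (rule member_le_sum[OF k _ fin]) auto
      also have "\<dots> \<le> 0" using Nr[of r] r M0 by (auto simp: e_def)
      finally show "y k r \<ge> 0" by simp
    qed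
  qed
  have ind: "\<forall>k\<in>P. \<forall>t\<in>{a..min b (a + real n * \<delta>)}. y k t \<ge> 0" for n
  proof (induction n)
    case 0
    then show ?case using init ab by auto
  next
    case (Suc n)
    define s0 where "s0 = min b (a + real n * \<delta>)"
    have s0: "s0 \<in> {a..b}" using ab \<delta> by (auto simp: s0_def)
    have h0: "\<forall>k\<in>P. y k s0 \<ge> 0" using Suc s0 by (auto simp: s0_def)
    show ?case
    proof (intro ballI)
      fix k t assume k: "k \<in> P" and t: "t \<in> {a..min b (a + real (Suc n) * \<delta>)}"
      show "y k t \<ge> 0"
      proof (cases "t \<le> s0")
        case True then show ?thesis using Suc k t by (auto simp: s0_def)
      next
        case False
        then have "s0 = a + real n * \<delta>" using t by (auto simp: s0_def)
        then have "t \<in> {s0..min b (s0+\<delta>)}" using t False by (auto simp: algebra_simps)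
        then show ?thesis using step[OF s0 h0] k by blast
      qed
    qed
  qed
  fix k t assume k: "k \<in> P" and t: "t \<in> {a..b}"
  obtain n where "b - a < real n * \<delta>" using reals_Archimedean3[OF \<delta>] by blast
  then have "t \<in> {a..min b (a + real n * \<delta>)}" using t by auto
  then show "y k t \<ge> 0" using ind k by blast
qed


lemma Ctrl_closed:
  assumes f: "\<And>n. f n \<in> Ctrl T CP M bd"
    and lim: "\<And>m. m \<in> {1..M} \<Longrightarrow> uniform_limit {0..T} (\<lambda>n. f n m) (g m) sequentially"
  shows "g \<in> Ctrl T CP M bd"
  unfolding Ctrl_def
proof (intro CollectI ballI conjI)
  fix m assume m: "m \<in> {1..M}"
  have pt: "(\<lambda>n. f n m t) \<longlonglongrightarrow> g m t" if "t \<in> {0..T}" for t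
    using tendsto_uniform_limitI[OF lim[OF m] that] .
  show "g m \<in> Psi T CP" unfolding Psi_def
  proof (intro CollectI ballI allI impI)
    fix t s \<epsilon> assume t: "t \<in> {0..T}" and s: "s \<in> {0..T}" and e: "(0::real) < \<epsilon>" and ts: "\<bar>t - s\<bar> \<le> \<epsilon>"
    have l: "(\<lambda>n. \<bar>f n m t - f n m s\<bar>) \<longlonglongrightarrow> \<bar>g m t - g m s\<bar>"
      by (intro tendsto_intros pt t s)
    have ev: "eventually (\<lambda>n. \<bar>f n m t - f n m s\<bar> \<le> CP \<epsilon>) sequentially"
    proof (intro always_eventually allI)
      fix n
      have "f n m \<in> Psi T CP" using f[of n] m unfolding Ctrl_def by auto
      then show "\<bar>f n m t - f n m s\<bar> \<le> CP \<epsilon>" using t s e ts unfolding Psi_def by auto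
    qed
    show "\<bar>g m t - g m s\<bar> \<le> CP \<epsilon>" by (rule tendsto_upperbound[OF l ev]) simp
  qed
  fix t assume t: "t \<in> {0..T}"
  have ev1: "eventually (\<lambda>n. 0 \<le> f n m t) sequentially"
    by (intro always_eventually allI) (use f m t in \<open>auto simp: Ctrl_def\<close>)
  have ev2: "eventually (\<lambda>n. f n m t \<le> bd) sequentially"
    by (intro always_eventually allI) (use f m t in \<open>auto simp: Ctrl_def\<close>)
  show "0 \<le> g m t" by (rule tendsto_lowerbound[OF pt[OF t] ev1]) simp
  show "g m t \<le> bd" by (rule tendsto_upperbound[OF pt[OF t] ev2]) simp
qed

lemma Psi_eqc:
  assumes CP: "(CP \<longlongrightarrow> 0) (at_right 0)" and x: "x \<in> {0..T}" and e: "e > 0"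
  shows "\<exists>d>0. \<forall>\<sigma>\<in>Psi T CP. \<forall>y\<in>{0..T}. \<bar>x - y\<bar> < d \<longrightarrow> \<bar>\<sigma> x - \<sigma> y\<bar> < e"
proof -
  have "eventually (\<lambda>\<epsilon>. CP \<epsilon> < e) (at_right 0)"
    using order_tendstoD(2)[OF CP e] .
  then obtain b where b: "b > 0" and hb: "\<And>\<epsilon>. \<epsilon> > 0 \<Longrightarrow> \<epsilon> < b \<Longrightarrow> CP \<epsilon> < e"
    unfolding eventually_at_right_field by auto
  show ?thesis
  proof (intro exI[of _ "b/2"] conjI ballI impI)
    show "b / 2 > 0" using b by simp
    fix \<sigma> y assume \<sigma>: "\<sigma> \<in> Psi T CP" and y: "y \<in> {0..T}" and xy: "\<bar>x - y\<bar> < b / 2"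
    have "\<bar>\<sigma> x - \<sigma> y\<bar> \<le> CP (b/2)" using \<sigma> x y xy b unfolding Psi_def by auto
    also have "\<dots> < e" using hb[of "b/2"] b by simp
    finally show "\<bar>\<sigma> x - \<sigma> y\<bar> < e" .
  qed
qed

locale prob =
  fixes kt :: "nat \<Rightarrow> nat" and M Kmin Kmax :: nat and p :: "nat \<Rightarrow> real" and \<beta> :: "real \<Rightarrow> real"
    and \<alpha> i0 T umax vmax \<beta>max :: real
  assumes M: "M \<ge> 1" and Kmin: "Kmin \<ge> 1" and kt0: "kt 0 = Kmin - 1" and ktM: "kt M = Kmax"
    and kt_mono: "strict_mono_on {0..M} kt"
    and p_nonneg: "\<forall>k\<in>{Kmin..Kmax}. p k \<ge> 0"
    and p_sum: "(\<Sum>k\<in>{Kmin..Kmax}. p k) = 1"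
    and T: "T > 0" and i0: "0 \<le> i0" "i0 \<le> 1"
    and \<alpha>: "0 < \<alpha>" "\<alpha> \<le> 1" and umax: "umax > 0" and vmax: "vmax \<ge> 0"
    and \<alpha>v: "\<alpha> * (1 + vmax) \<le> 1"
    and \<beta>: "\<forall>t\<in>{0..T}. 0 \<le> \<beta> t \<and> \<beta> t \<le> \<beta>max"
begin

abbreviation q where "q l \<equiv> qq p Kmin Kmax l"

definition G where "G = Sigma {1..M} (grp kt)"

definition Sf where "Sf v i s = (\<Sum>pp\<in>{1..M}. \<Sum>l\<in>grp kt pp. q l * i l s * (\<alpha> * (1 + v pp s)))"

definition Fint where "Fint u v i m k s = \<beta> s * (1 - i k s) * real k * Sf v i s + u m s * (1 - i k s)"

definition bndc :: "real \<Rightarrow> (nat \<Rightarrow> real \<Rightarrow> real) \<Rightarrow> bool" where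
  "bndc bd u \<longleftrightarrow> (\<forall>m\<in>{1..M}. \<forall>t\<in>{0..T}. 0 \<le> u m t \<and> u m t \<le> bd)"

definition SB where "SB = (\<Sum>j\<in>G. q (snd j))"

lemma finG: "finite G" unfolding G_def grp_def by auto

lemma grp_sub: assumes "m \<in> {1..M}" shows "grp kt m \<subseteq> {Kmin..Kmax}"
proof -
  have a: "Kmin \<le> kt (m - 1) + 1"
  proof (cases "m - 1 = 0")
    case True then show ?thesis using kt0 Kmin by simp
  next
    case False
    then have "kt 0 < kt (m - 1)" using kt_mono assms by (intro strict_mono_onD[OF kt_mono]) auto
    then show ?thesis using kt0 by simp
  qed
  have b: "kt m \<le> Kmax"
  proof (cases "m = M")
    case True then show ?thesis using ktM by simp
  next
    case False
    then have "kt m < kt M" using assms by (intro strict_mono_onD[OF kt_mono]) auto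
    then show ?thesis using ktM by simp
  qed
  show ?thesis using a b unfolding grp_def by auto
qed

lemma grp_mem: "k \<in> grp kt m \<Longrightarrow> 1 \<le> m \<Longrightarrow> m \<le> M \<Longrightarrow> Kmin \<le> k \<and> k \<le> Kmax"
  using grp_sub[of m] by auto

lemma grp_cover: assumes k: "k \<in> {Kmin..Kmax}" shows "\<exists>m\<in>{1..M}. k \<in> grp kt m"
proof -
  define m where "m = (LEAST m. k \<le> kt m)"
  have ex: "k \<le> kt M" using k ktM by simp
  have km: "k \<le> kt m" unfolding m_def by (rule LeastI[of "\<lambda>m. k \<le> kt m", OF ex])
  have mM: "m \<le> M" unfolding m_def by (rule Least_le[of "\<lambda>m. k \<le> kt m", OF ex])
  have m0: "m \<noteq> 0" proof assume "m = 0" then show False using km kt0 k Kmin by auto qed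
  have "\<not> k \<le> kt (m - 1)" unfolding m_def
    by (rule not_less_Least) (use m0 in \<open>simp add: m_def[symmetric]\<close>)
  then show ?thesis using km mM m0 unfolding grp_def by (intro bexI[of _ m]) auto
qed

lemma G_mem: "j \<in> G \<Longrightarrow> fst j \<in> {1..M} \<and> snd j \<in> grp kt (fst j) \<and> snd j \<in> {Kmin..Kmax}"
proof -
  assume "j \<in> G"
  then obtain m k where j: "j = (m, k)" "m \<in> {1..M}" "k \<in> grp kt m" unfolding G_def by auto
  then show ?thesis using grp_sub[of m] by auto
qed

lemma kbar_pos: "kbar p Kmin Kmax > 0"
proof -
  have "(\<Sum>k\<in>{Kmin..Kmax}. p k) \<le> (\<Sum>k\<in>{Kmin..Kmax}. real k * p k)"
  proof (intro sum_mono)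
    fix k assume k: "k \<in> {Kmin..Kmax}"
    then have "1 \<le> real k" "p k \<ge> 0" using Kmin p_nonneg by auto
    then show "p k \<le> real k * p k" using mult_right_mono[of 1 "real k" "p k"] by simp
  qed
  then show ?thesis using p_sum unfolding kbar_def by simp
qed

lemma q_nonneg: "l \<in> {Kmin..Kmax} \<Longrightarrow> q l \<ge> 0"
  using kbar_pos p_nonneg unfolding qq_def by auto

lemma q_le_SB: "j \<in> G \<Longrightarrow> q (snd j) \<le> SB"
  unfolding SB_def using finG G_mem q_nonneg by (intro member_le_sum) auto

lemma SB_nonneg: "SB \<ge> 0"
  unfolding SB_def using G_mem q_nonneg by (intro sum_nonneg) auto

lemma Sf_G: "Sf v i s = (\<Sum>j\<in>G. q (snd j) * i (snd j) s * (\<alpha> * (1 + v (fst j) s)))"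
  unfolding Sf_def G_def by (subst sum.Sigma) (auto simp: grp_def case_prod_beta)

lemma sol_alt: "is_solution kt M Kmin Kmax p \<beta> \<alpha> i0 T u v i \<longleftrightarrow>
   (\<forall>m\<in>{1..M}. \<forall>k\<in>grp kt m. \<forall>t\<in>{0..T}. (Fint u v i m k has_integral (i k t - i0)) {0..t})"
  unfolding is_solution_def Fint_def Sf_def by simp


lemma sol_props:
  assumes sol: "is_solution kt M Kmin Kmax p \<beta> \<alpha> i0 T u v i" and j: "j \<in> G"
  shows "i (snd j) 0 = i0" "continuous_on {0..T} (i (snd j))"
    "\<And>s r. 0 \<le> s \<Longrightarrow> s \<le> r \<Longrightarrow> r \<le> T \<Longrightarrow>
        (Fint u v i (fst j) (snd j) has_integral (i (snd j) r - i (snd j) s)) {s..r}"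
proof -
  obtain m k where mk: "j = (m,k)" "m\<in>{1..M}" "k \<in> grp kt m" using j unfolding G_def by auto
  define F where "F = Fint u v i m k"
  have hi: "\<And>t. t\<in>{0..T} \<Longrightarrow> (F has_integral (i k t - i0)) {0..t}"
    using sol mk unfolding sol_alt F_def by auto
  have "(0::real) \<in> {0..T}" using T by simp
  from hi[OF this] have "(F has_integral (i k 0 - i0)) {0..0}" .
  moreover have "(F has_integral 0) {0..0}" by (rule has_integral_null_real) simp
  ultimately have "i k 0 - i0 = 0" by (rule has_integral_unique)
  then show "i (snd j) 0 = i0" using mk by simp
  have ieq: "i k t = i0 + integral {0..t} F" if t: "t\<in>{0..T}" for t
  proof -
    have "integral {0..t} F = i k t - i0" by (rule integral_unique[OF hi[OF t]])
    then show ?thesis by simp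
  qed
  have FT: "F integrable_on {0..T}" using hi[of T] T by auto
  have "continuous_on {0..T} (\<lambda>t. i0 + integral {0..t} F)"
    by (intro continuous_intros indefinite_integral_continuous_1 FT)
  then have "continuous_on {0..T} (i k)" by (rule continuous_on_eq) (use ieq in auto)
  then show "continuous_on {0..T} (i (snd j))" using mk by simp
  fix s r assume sr: "0 \<le> s" "s \<le> r" "r \<le> T"
  have Fs: "(F has_integral (i k s - i0)) {0..s}" using hi sr by auto
  have Fr: "(F has_integral (i k r - i0)) {0..r}" using hi sr by auto
  have "F integrable_on {s..r}" by (rule integrable_subinterval_real[OF FT]) (use sr in auto)
  then obtain J where FJ: "(F has_integral J) {s..r}" by blast
  have "(F has_integral (i k s - i0 + J)) {0..r}" by (rule has_integral_combine[OF _ _ Fs FJ]) (use sr in auto)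
  then have "i k r - i0 = i k s - i0 + J" using Fr has_integral_unique by blast
  then have "J = i k r - i k s" by simp
  then show "(Fint u v i (fst j) (snd j) has_integral (i (snd j) r - i (snd j) s)) {s..r}"
    using FJ mk F_def by simp
qed

lemma finite_bound:
  fixes f :: "'a \<Rightarrow> real \<Rightarrow> real"
  assumes "finite A" "\<And>a. a \<in> A \<Longrightarrow> \<exists>B. \<forall>s\<in>S. \<bar>f a s\<bar> \<le> B"
  shows "\<exists>B\<ge>0. \<forall>a\<in>A. \<forall>s\<in>S. \<bar>f a s\<bar> \<le> B"
  using assms
proof (induction A rule: finite_induct)
  case empty then show ?case by auto
next
  case (insert a A)
  then obtain B1 where B1: "B1 \<ge> 0" "\<forall>a\<in>A. \<forall>s\<in>S. \<bar>f a s\<bar> \<le> B1" by auto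
  obtain B2 where B2: "\<forall>s\<in>S. \<bar>f a s\<bar> \<le> B2" using insert.prems by auto
  show ?case using B1 B2 by (intro exI[of _ "max B1 B2"]) (auto intro: order_trans[OF _ max.cobounded1] order_trans[OF _ max.cobounded2])
qed

lemma G_k_le: "j \<in> G \<Longrightarrow> real (snd j) \<le> real Kmax"
  using G_mem by auto

lemma \<beta>max0: "\<beta>max \<ge> 0" using \<beta> T by (meson atLeastAtMost_iff less_imp_le order_refl order_trans)

lemma vfac: assumes "bndc vmax v" "j \<in> G" "s \<in> {0..T}"
  shows "0 \<le> \<alpha> * (1 + v (fst j) s) \<and> \<alpha> * (1 + v (fst j) s) \<le> 1"
proof -
  have v: "0 \<le> v (fst j) s" "v (fst j) s \<le> vmax" using assms G_mem unfolding bndc_def by auto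
  have mb: "\<alpha> * (1 + v (fst j) s) \<le> \<alpha> * (1 + vmax)"
    by (rule mult_left_mono) (use v \<alpha> in auto)
  have "0 \<le> \<alpha> * (1 + v (fst j) s)" using v \<alpha> by simp
  then show ?thesis using order_trans[OF mb \<alpha>v] by blast
qed

lemma Fint_eq: "Fint u v i m k s = (1 - i k s) * (\<beta> s * real k * Sf v i s + u m s)"
  unfolding Fint_def by (simp add: algebra_simps)

lemma abs_aux: "0 \<le> (a::real) \<Longrightarrow> 0 \<le> c \<Longrightarrow> c \<le> 1 \<Longrightarrow> \<bar>a * x * c\<bar> = a * (\<bar>x\<bar> * c)"
  by (simp add: abs_mult)

lemma aux2: "(y::real) \<le> 0 \<Longrightarrow> y * A \<le> (-y) * \<bar>A\<bar>"
proof -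
  assume "y \<le> 0"
  then have "(-y) * (-A) \<le> (-y) * \<bar>A\<bar>" by (intro mult_left_mono) auto
  then show ?thesis by simp
qed

lemma inv01:
  assumes sol: "is_solution kt M Kmin Kmax p \<beta> \<alpha> i0 T u v i"
    and bu: "bndc umax u" and bv: "bndc vmax v"
  shows "\<forall>j\<in>G. \<forall>t\<in>{0..T}. 0 \<le> i (snd j) t \<and> i (snd j) t \<le> 1"
proof -
  note props = sol_props[OF sol]
  have "\<exists>B\<ge>0. \<forall>j\<in>G. \<forall>s\<in>{0..T}. \<bar>i (snd j) s\<bar> \<le> B"
  proof (rule finite_bound[OF finG])
    fix j assume "j \<in> G"
    have "bounded (i (snd j) ` {0..T})"
      using compact_imp_bounded[OF compact_continuous_image[OF props(2)[OF \<open>j \<in> G\<close>] compact_Icc]] .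
    then show "\<exists>B. \<forall>s\<in>{0..T}. \<bar>i (snd j) s\<bar> \<le> B" by (auto simp: bounded_real)
  qed
  then obtain Bi where Bi0: "Bi \<ge> 0" and Bi: "\<And>j s. j \<in> G \<Longrightarrow> s \<in> {0..T} \<Longrightarrow> \<bar>i (snd j) s\<bar> \<le> Bi" by blast
  have Sfb: "\<bar>Sf v i s\<bar> \<le> Bi * SB" if s: "s \<in> {0..T}" for s
  proof -
    have "\<bar>Sf v i s\<bar> \<le> (\<Sum>j\<in>G. \<bar>q (snd j) * i (snd j) s * (\<alpha> * (1 + v (fst j) s))\<bar>)"
      unfolding Sf_G by (rule sum_abs)
    also have "\<dots> \<le> (\<Sum>j\<in>G. Bi * q (snd j))"
    proof (rule sum_mono)
      fix j assume j: "j \<in> G"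
      have q0: "q (snd j) \<ge> 0" using q_nonneg G_mem[OF j] by auto
      have c: "0 \<le> \<alpha> * (1 + v (fst j) s)" "\<alpha> * (1 + v (fst j) s) \<le> 1" using vfac[OF bv j s] by auto
      have "\<bar>q (snd j) * i (snd j) s * (\<alpha> * (1 + v (fst j) s))\<bar> = q (snd j) * (\<bar>i (snd j) s\<bar> * (\<alpha> * (1 + v (fst j) s)))"
        using q0 c by (rule abs_aux)
      also have "\<dots> \<le> q (snd j) * (Bi * 1)"
        using Bi[OF j s] c q0 by (intro mult_left_mono mult_mono) auto
      finally show "\<bar>q (snd j) * i (snd j) s * (\<alpha> * (1 + v (fst j) s))\<bar> \<le> Bi * q (snd j)" by (simp add: mult.commute)
    qed
    also have "\<dots> = Bi * SB" unfolding SB_def by (simp add: sum_distrib_left)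
    finally show ?thesis .
  qed
  define C1 where "C1 = \<beta>max * real Kmax * (Bi * SB) + umax"
  have C1: "C1 \<ge> 0" unfolding C1_def using \<beta>max0 Bi0 SB_nonneg umax by auto
  have Ab: "\<bar>\<beta> s * real (snd j) * Sf v i s + u (fst j) s\<bar> \<le> C1" if j: "j \<in> G" and s: "s \<in> {0..T}" for j s
  proof -
    have "\<bar>\<beta> s * real (snd j) * Sf v i s\<bar> = \<beta> s * real (snd j) * \<bar>Sf v i s\<bar>"
      using \<beta> s by (simp add: abs_mult)
    also have "\<dots> \<le> \<beta>max * real Kmax * (Bi * SB)"
      using \<beta> s G_k_le[OF j] Sfb[OF s] \<beta>max0 by (intro mult_mono) auto
    finally have a: "\<bar>\<beta> s * real (snd j) * Sf v i s\<bar> \<le> \<beta>max * real Kmax * (Bi * SB)" .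
    have b: "\<bar>u (fst j) s\<bar> \<le> umax" using bu G_mem[OF j] s unfolding bndc_def by auto
    show ?thesis using a b unfolding C1_def by linarith
  qed
  have le1: "\<And>j t. j \<in> G \<Longrightarrow> t \<in> {0..T} \<Longrightarrow> 0 \<le> 1 - i (snd j) t"
  proof (rule sign_lemma[OF finG _ C1, of 0 T "\<lambda>j s. 1 - i (snd j) s" "\<lambda>j s. - Fint u v i (fst j) (snd j) s"])
    show "0 \<le> T" using T by simp
    show "\<And>k. k \<in> G \<Longrightarrow> continuous_on {0..T} (\<lambda>s. 1 - i (snd k) s)"
      using props(2) by (intro continuous_intros) auto
    show "\<And>k. k \<in> G \<Longrightarrow> 0 \<le> 1 - i (snd k) 0" using props(1) i0 by auto
    show "\<And>k s r. k \<in> G \<Longrightarrow> 0 \<le> s \<Longrightarrow> s \<le> r \<Longrightarrow> r \<le> T \<Longrightarrow>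
      ((\<lambda>s. - Fint u v i (fst k) (snd k) s) has_integral (1 - i (snd k) r - (1 - i (snd k) s))) {s..r}"
    proof -
      fix k s r assume a: "k \<in> G" "0 \<le> s" "s \<le> r" "r \<le> T"
      from has_integral_neg[OF props(3)[OF a]]
      show "((\<lambda>s. - Fint u v i (fst k) (snd k) s) has_integral (1 - i (snd k) r - (1 - i (snd k) s))) {s..r}"
        by simp
    qed
    fix j s assume j: "j \<in> G" and s: "s \<in> {0..T}" and y: "1 - i (snd j) s \<le> 0"
    define N where "N = (\<Sum>j\<in>G. max 0 (- (1 - i (snd j) s)))"
    have yN: "- (1 - i (snd j) s) \<le> N"
    proof -
      have "max 0 (- (1 - i (snd j) s)) \<le> N" unfolding N_def by (rule member_le_sum[OF j _ finG]) auto
      then show ?thesis by simp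
    qed
    have "Fint u v i (fst j) (snd j) s \<le> (- (1 - i (snd j) s)) * \<bar>\<beta> s * real (snd j) * Sf v i s + u (fst j) s\<bar>"
      unfolding Fint_eq using y by (rule aux2)
    also have "\<dots> \<le> N * C1" using yN Ab[OF j s] y C1 by (intro mult_mono) auto
    finally show "- C1 * N \<le> - Fint u v i (fst j) (snd j) s" by (simp add: algebra_simps)
  qed
  define C2 where "C2 = (1 + Bi) * \<beta>max * real Kmax * SB"
  have C2: "C2 \<ge> 0" unfolding C2_def using \<beta>max0 Bi0 SB_nonneg by auto
  have ge0: "\<And>j t. j \<in> G \<Longrightarrow> t \<in> {0..T} \<Longrightarrow> 0 \<le> i (snd j) t"
  proof (rule sign_lemma[OF finG _ C2, of 0 T "\<lambda>j s. i (snd j) s" "\<lambda>j s. Fint u v i (fst j) (snd j) s"])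
    show "0 \<le> T" using T by simp
    show "\<And>k. k \<in> G \<Longrightarrow> continuous_on {0..T} (\<lambda>s. i (snd k) s)"
      using props(2) by auto
    show "\<And>k. k \<in> G \<Longrightarrow> 0 \<le> i (snd k) 0" using props(1) i0 by auto
    show "\<And>k s r. k \<in> G \<Longrightarrow> 0 \<le> s \<Longrightarrow> s \<le> r \<Longrightarrow> r \<le> T \<Longrightarrow>
      ((\<lambda>s. Fint u v i (fst k) (snd k) s) has_integral (i (snd k) r - i (snd k) s)) {s..r}"
      using props(3) by auto
    fix j s assume j: "j \<in> G" and s: "s \<in> {0..T}"
    define N where "N = (\<Sum>j\<in>G. max 0 (- i (snd j) s))"
    have N0: "N \<ge> 0" unfolding N_def by (intro sum_nonneg) auto
    have SfN: "Sf v i s \<ge> - (SB * N)"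
    proof -
      have "(\<Sum>j\<in>G. - (SB * max 0 (- i (snd j) s))) \<le> Sf v i s"
        unfolding Sf_G
      proof (rule sum_mono)
        fix j assume j: "j \<in> G"
        have q0: "q (snd j) \<ge> 0" using q_nonneg G_mem[OF j] by auto
        have c: "0 \<le> \<alpha> * (1 + v (fst j) s)" "\<alpha> * (1 + v (fst j) s) \<le> 1" using vfac[OF bv j s] by auto
        show "- (SB * max 0 (- i (snd j) s)) \<le> q (snd j) * i (snd j) s * (\<alpha> * (1 + v (fst j) s))"
        proof (cases "i (snd j) s \<ge> 0")
          case True
          then show ?thesis using q0 c SB_nonneg by simp
        next
          case False
          then have "i (snd j) s * (\<alpha> * (1 + v (fst j) s)) \<ge> i (snd j) s * 1"
            using c by (intro mult_left_mono_neg) auto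
          then have "q (snd j) * i (snd j) s * (\<alpha> * (1 + v (fst j) s)) \<ge> q (snd j) * i (snd j) s"
            using q0 mult_left_mono by (simp add: mult.assoc mult_left_mono)
          moreover have "q (snd j) * i (snd j) s \<ge> SB * i (snd j) s"
            using q_le_SB[OF j] False by (intro mult_right_mono_neg) auto
          moreover have "- (SB * max 0 (- i (snd j) s)) = SB * i (snd j) s" using False by simp
          ultimately show ?thesis by linarith
        qed
      qed
      then show ?thesis unfolding N_def by (simp add: sum_distrib_left sum_negf)
    qed
    have X0: "0 \<le> \<beta> s * (1 - i (snd j) s) * real (snd j)" using \<beta> s le1[OF j s] by simp
    have X1: "\<beta> s * (1 - i (snd j) s) * real (snd j) \<le> \<beta>max * (1 + Bi) * real Kmax"
      using \<beta> s le1[OF j s] Bi[OF j s] G_k_le[OF j] \<beta>max0 by (intro mult_mono) auto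
    have "- C2 * N = - ((\<beta>max * (1 + Bi) * real Kmax) * (SB * N))" unfolding C2_def by (simp add: algebra_simps)
    also have "\<dots> \<le> - ((\<beta> s * (1 - i (snd j) s) * real (snd j)) * (SB * N))"
      using X1 SB_nonneg N0 by (simp add: mult_right_mono)
    also have "\<dots> \<le> (\<beta> s * (1 - i (snd j) s) * real (snd j)) * Sf v i s"
      using X0 SfN by (metis mult_left_mono mult_minus_right)
    also have "\<dots> \<le> Fint u v i (fst j) (snd j) s"
      unfolding Fint_def using bu G_mem[OF j] s le1[OF j s] unfolding bndc_def by auto
    finally show "- C2 * (\<Sum>j\<in>G. max 0 (- i (snd j) s)) \<le> Fint u v i (fst j) (snd j) s"
      unfolding N_def .
  qed
  show ?thesis using le1 ge0 by auto
qed

definition Lc where "Lc = \<beta>max * real Kmax * SB + umax"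

lemma Lc0: "Lc \<ge> 0" unfolding Lc_def using \<beta>max0 SB_nonneg umax by auto

lemma lipsch:
  assumes sol: "is_solution kt M Kmin Kmax p \<beta> \<alpha> i0 T u v i"
    and bu: "bndc umax u" and bv: "bndc vmax v" and j: "j \<in> G"
  shows "\<forall>s\<in>{0..T}. \<forall>t\<in>{0..T}. \<bar>i (snd j) t - i (snd j) s\<bar> \<le> Lc * \<bar>t - s\<bar>"
proof -
  note I = inv01[OF sol bu bv]
  have Fb: "\<bar>Fint u v i (fst j) (snd j) x\<bar> \<le> Lc" if x: "x \<in> {0..T}" for x
  proof -
    have S0: "0 \<le> Sf v i x" unfolding Sf_G
    proof (rule sum_nonneg)
      fix j assume j: "j \<in> G"
      have q0: "q (snd j) \<ge> 0" using q_nonneg G_mem[OF j] by auto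
      have c: "0 \<le> \<alpha> * (1 + v (fst j) x)" using vfac[OF bv j x] by auto
      have i0': "0 \<le> i (snd j) x" using I j x by auto
      show "0 \<le> q (snd j) * i (snd j) x * (\<alpha> * (1 + v (fst j) x))"
        by (rule mult_nonneg_nonneg[OF mult_nonneg_nonneg[OF q0 i0'] c])
    qed
    have S1: "Sf v i x \<le> SB" unfolding Sf_G SB_def
    proof (rule sum_mono)
      fix j assume j: "j \<in> G"
      have q0: "q (snd j) \<ge> 0" using q_nonneg G_mem[OF j] by auto
      have c: "0 \<le> \<alpha> * (1 + v (fst j) x)" "\<alpha> * (1 + v (fst j) x) \<le> 1" using vfac[OF bv j x] by auto
      have "i (snd j) x * (\<alpha> * (1 + v (fst j) x)) \<le> 1 * 1" using I j x c by (intro mult_mono) auto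
      then show "q (snd j) * i (snd j) x * (\<alpha> * (1 + v (fst j) x)) \<le> q (snd j)"
        using q0 mult_left_mono[of _ 1 "q (snd j)"] by (simp add: mult.assoc)
    qed
    have A0: "0 \<le> \<beta> x * real (snd j) * Sf v i x + u (fst j) x"
      using \<beta> x S0 bu G_mem[OF j] unfolding bndc_def by auto
    have "\<beta> x * real (snd j) * Sf v i x \<le> \<beta>max * real Kmax * SB"
      using \<beta> x S0 S1 G_k_le[OF j] \<beta>max0 by (intro mult_mono) auto
    then have A1: "\<beta> x * real (snd j) * Sf v i x + u (fst j) x \<le> Lc"
      using bu G_mem[OF j] x unfolding bndc_def Lc_def by fastforce
    have y: "0 \<le> 1 - i (snd j) x" "1 - i (snd j) x \<le> 1" using I j x by auto
    have "\<bar>Fint u v i (fst j) (snd j) x\<bar> = (1 - i (snd j) x) * (\<beta> x * real (snd j) * Sf v i x + u (fst j) x)"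
      unfolding Fint_eq using y A0 by simp
    also have "\<dots> \<le> 1 * Lc" using y A0 A1 by (intro mult_mono) auto
    finally show ?thesis by simp
  qed
  have one: "\<bar>i (snd j) t - i (snd j) s\<bar> \<le> Lc * (t - s)" if st: "0 \<le> s" "s \<le> t" "t \<le> T" for s t
  proof -
    have h: "(Fint u v i (fst j) (snd j) has_integral (i (snd j) t - i (snd j) s)) (cbox s t)"
      using sol_props(3)[OF sol j st] by simp
    have "norm (i (snd j) t - i (snd j) s) \<le> Lc * (t - s)"
      using has_integral_bound[OF Lc0 h] Fb st by auto
    then show ?thesis by simp
  qed
  show ?thesis
  proof (intro ballI)
    fix s t assume s: "s \<in> {0..T}" and t: "t \<in> {0..T}"
    show "\<bar>i (snd j) t - i (snd j) s\<bar> \<le> Lc * \<bar>t - s\<bar>"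
    proof (cases "s \<le> t")
      case True then show ?thesis using one[of s t] s t by auto
    next
      case False then show ?thesis using one[of t s] s t by (auto simp: abs_minus_commute)
    qed
  qed
qed


lemma main:
  fixes B :: real and CP :: "real \<Rightarrow> real" and b c :: "nat \<Rightarrow> real \<Rightarrow> real"
    and w :: "nat \<Rightarrow> (nat \<Rightarrow> real \<Rightarrow> real) \<times> (nat \<Rightarrow> real \<Rightarrow> real)"
  assumes bc: "\<forall>m\<in>{1..M}. continuous_on {0..} (b m) \<and> continuous_on {0..} (c m)"
    and CP: "(CP \<longlongrightarrow> 0) (at_right 0)"
    and wW: "\<forall>n. w n \<in> Wset kt M Kmin Kmax p \<beta> \<alpha> i0 T B CP umax vmax b c"
  shows "\<exists>r w0. strict_mono r \<and> w0 \<in> Wset kt M Kmin Kmax p \<beta> \<alpha> i0 T B CP umax vmax b c \<and>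
              (\<forall>m\<in>{1..M}.
                 uniform_limit {0..T} (\<lambda>n. fst (w (r n)) m) (fst w0 m) sequentially \<and>
                 uniform_limit {0..T} (\<lambda>n. snd (w (r n)) m) (snd w0 m) sequentially)"
proof -
  define uu where "uu n = fst (w n)" for n
  define vv where "vv n = snd (w n)" for n
  define cost where "cost u v i = cost_integrand kt M Kmin Kmax p \<beta> \<alpha> b c u v i" for u v i
  define PP where "PP n i \<longleftrightarrow> is_solution kt M Kmin Kmax p \<beta> \<alpha> i0 T (uu n) (vv n) i \<and>
      (cost (uu n) (vv n) i has_integral B) {0..T}" for n i
  have memb: "uu n \<in> Ctrl T CP M umax \<and> vv n \<in> Ctrl T CP M vmax \<and> (\<exists>i. PP n i)" for n
  proof -
    have "w n = (uu n, vv n)" by (simp add: uu_def vv_def)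
    then show ?thesis using wW[rule_format, of n] unfolding Wset_def PP_def cost_def by auto
  qed
  define ii where "ii n = (SOME i. PP n i)" for n
  have iiP: "PP n (ii n)" for n unfolding ii_def using memb[of n] by (metis someI_ex)
  have sol: "is_solution kt M Kmin Kmax p \<beta> \<alpha> i0 T (uu n) (vv n) (ii n)" for n
    using iiP[of n] unfolding PP_def by auto
  have costB: "(cost (uu n) (vv n) (ii n) has_integral B) {0..T}" for n
    using iiP[of n] unfolding PP_def by auto
  have bu: "bndc umax (uu n)" for n using memb[of n] unfolding Ctrl_def bndc_def by auto
  have bv: "bndc vmax (vv n)" for n using memb[of n] unfolding Ctrl_def bndc_def by auto
  have Psu: "uu n m \<in> Psi T CP" if "m\<in>{1..M}" for n m using memb[of n] that unfolding Ctrl_def by auto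
  have Psv: "vv n m \<in> Psi T CP" if "m\<in>{1..M}" for n m using memb[of n] that unfolding Ctrl_def by auto
  have inG: "\<exists>j\<in>G. snd j = k" if kK: "k \<in> {Kmin..Kmax}" for k
  proof -
    obtain m where "m\<in>{1..M}" "k\<in>grp kt m" using grp_cover[OF kK] by blast
    then have "(m,k) \<in> G" unfolding G_def by auto
    then show ?thesis by force
  qed
  have iin: "0 \<le> ii n k t \<and> ii n k t \<le> 1" if "k \<in> {Kmin..Kmax}" "t \<in> {0..T}" for n k t
    using inG[OF that(1)] inv01[OF sol bu bv] that(2) by fastforce
  have iiL: "\<bar>ii n k t - ii n k s\<bar> \<le> Lc * \<bar>t - s\<bar>" if kK: "k\<in>{Kmin..Kmax}" and st: "s\<in>{0..T}" "t\<in>{0..T}" for n k s t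
  proof -
    obtain j where "j \<in> G" "snd j = k" using inG[OF kK] by blast
    then show ?thesis using lipsch[OF sol bu bv \<open>j \<in> G\<close>] st by blast
  qed
  define J :: "(nat \<times> nat) set" where "J = ({0,1} \<times> {1..M}) \<union> ({2} \<times> {Kmin..Kmax})"
  define Fam where "Fam (j::nat\<times>nat) n t = (if fst j = 0 then uu n (snd j) t else if fst j = 1 then vv n (snd j) t else ii n (snd j) t)" for j n t
  define Bd where "Bd = umax + vmax + 1"
  have finJ: "finite J" unfolding J_def by auto
  have FamB: "\<forall>j\<in>J. \<forall>n x. x \<in> {0..T} \<longrightarrow> \<bar>Fam j n x\<bar> \<le> Bd"
  proof (intro ballI allI impI)
    fix j n x assume j: "j\<in>J" and x: "x\<in>{0..T}"
    consider (u) m where "j = (0,m)" "m\<in>{1..M}" | (v) m where "j=(1,m)" "m\<in>{1..M}"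
      | (i) k where "j = (2,k)" "k\<in>{Kmin..Kmax}" using j unfolding J_def by auto
    then show "\<bar>Fam j n x\<bar> \<le> Bd"
    proof cases
      case u then show ?thesis using bu[of n] x vmax unfolding Fam_def bndc_def Bd_def by force
    next
      case v then show ?thesis using bv[of n] x umax unfolding Fam_def bndc_def Bd_def by force
    next
      case i then show ?thesis using iin[of k x n] vmax umax x unfolding Fam_def Bd_def by auto
    qed
  qed
  have FamE: "\<forall>j\<in>J. \<forall>x\<in>{0..T}. \<forall>e>0. \<exists>d>0. \<forall>n y. y \<in> {0..T} \<and> \<bar>x - y\<bar> < d \<longrightarrow> \<bar>Fam j n x - Fam j n y\<bar> < e"
  proof (intro ballI allI impI)
    fix j x e assume j: "j\<in>J" and x: "x\<in>{0..T}" and e: "(e::real) > 0"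
    consider (u) m where "j = (0,m)" "m\<in>{1..M}" | (v) m where "j=(1,m)" "m\<in>{1..M}"
      | (i) k where "j = (2,k)" "k\<in>{Kmin..Kmax}" using j unfolding J_def by auto
    then show "\<exists>d>0. \<forall>n y. y \<in> {0..T} \<and> \<bar>x - y\<bar> < d \<longrightarrow> \<bar>Fam j n x - Fam j n y\<bar> < e"
    proof cases
      case u
      obtain d where d: "d>0" "\<forall>\<sigma>\<in>Psi T CP. \<forall>y\<in>{0..T}. \<bar>x-y\<bar> < d \<longrightarrow> \<bar>\<sigma> x - \<sigma> y\<bar> < e"
        using Psi_eqc[OF CP x e] by blast
      show ?thesis using d Psu[OF u(2)] unfolding Fam_def u by (intro exI[of _ d]) auto
    next
      case v
      obtain d where d: "d>0" "\<forall>\<sigma>\<in>Psi T CP. \<forall>y\<in>{0..T}. \<bar>x-y\<bar> < d \<longrightarrow> \<bar>\<sigma> x - \<sigma> y\<bar> < e"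
        using Psi_eqc[OF CP x e] by blast
      show ?thesis using d Psv[OF v(2)] unfolding Fam_def v by (intro exI[of _ d]) auto
    next
      case i
      define d where "d = e / (Lc + 1)"
      have d: "d > 0" using e Lc0 by (simp add: d_def)
      show ?thesis
      proof (intro exI[of _ d] conjI allI impI d)
        fix n y assume y: "y \<in> {0..T} \<and> \<bar>x - y\<bar> < d"
        have "\<bar>Fam j n x - Fam j n y\<bar> = \<bar>ii n k x - ii n k y\<bar>" using i unfolding Fam_def by simp
        also have "\<dots> \<le> Lc * \<bar>x - y\<bar>" using iiL[of k y x n] i x y by auto
        also have "\<dots> \<le> Lc * d" using y Lc0 by (intro mult_left_mono) auto
        also have "\<dots> < e" using e Lc0 by (simp add: d_def field_simps)
        finally show "\<bar>Fam j n x - Fam j n y\<bar> < e" .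
      qed
    qed
  qed
  obtain r where r: "strict_mono r"
    and conv: "\<forall>j\<in>J. \<exists>g. uniform_limit {0..T} (\<lambda>n. Fam j (r n)) g sequentially"
    using AA_multi[OF finJ compact_Icc FamB FamE] by blast
  define lim where "lim j = (SOME g. uniform_limit {0..T} (\<lambda>n. Fam j (r n)) g sequentially)" for j
  have limP: "uniform_limit {0..T} (\<lambda>n. Fam j (r n)) (lim j) sequentially" if jJ: "j\<in>J" for j
  proof -
    obtain g where "uniform_limit {0..T} (\<lambda>n. Fam j (r n)) g sequentially" using conv jJ by blast
    then show ?thesis unfolding lim_def
      by (rule someI[where P="\<lambda>g. uniform_limit {0..T} (\<lambda>n. Fam j (r n)) g sequentially"])
  qed
  define u0 where "u0 m = lim (0,m)" for m
  define v0 where "v0 m = lim (1,m)" for m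
  define i0f where "i0f k = lim (2,k)" for k
  have Lu: "uniform_limit {0..T} (\<lambda>n. uu (r n) m) (u0 m) sequentially" if "m\<in>{1..M}" for m
  proof -
    have "(0,m) \<in> J" using that unfolding J_def by auto
    from limP[OF this] show ?thesis unfolding Fam_def u0_def by simp
  qed
  have Lv: "uniform_limit {0..T} (\<lambda>n. vv (r n) m) (v0 m) sequentially" if "m\<in>{1..M}" for m
  proof -
    have "(1,m) \<in> J" using that unfolding J_def by auto
    from limP[OF this] show ?thesis unfolding Fam_def v0_def by simp
  qed
  have Li: "uniform_limit {0..T} (\<lambda>n. ii (r n) k) (i0f k) sequentially" if "k\<in>{Kmin..Kmax}" for k
  proof -
    have "(2,k) \<in> J" using that unfolding J_def by auto
    from limP[OF this] show ?thesis unfolding Fam_def i0f_def by simp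
  qed
  have ULu: "ULb {0..T} (\<lambda>n s. uu (r n) m s) (\<lambda>s. u0 m s)" if "m\<in>{1..M}" for m
    by (rule ULb_base[OF Lu[OF that], of umax]) (use bu that umax in \<open>auto simp: bndc_def\<close>)
  have ULv: "ULb {0..T} (\<lambda>n s. vv (r n) m s) (\<lambda>s. v0 m s)" if "m\<in>{1..M}" for m
    by (rule ULb_base[OF Lv[OF that], of vmax]) (use bv that vmax in \<open>auto simp: bndc_def\<close>)
  have ULi: "ULb {0..T} (\<lambda>n s. ii (r n) k s) (\<lambda>s. i0f k s)" if "k\<in>{Kmin..Kmax}" for k
    by (rule ULb_base[OF Li[OF that], of 1]) (use iin that in force)
  have \<beta>b: "bounded (\<beta> ` {0..T})"
    unfolding bounded_real using \<beta> by (intro exI[of _ \<beta>max]) auto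
  have ULF: "ULb {0..T} (\<lambda>n s. Fint (uu (r n)) (vv (r n)) (ii (r n)) m k s) (\<lambda>s. Fint u0 v0 i0f m k s)"
    if "m\<in>{1..M}" "k\<in>grp kt m" for m k
    unfolding Fint_def Sf_def
    apply (intro ULb_add ULb_mult ULb_diff ULb_sum ULb_constc ULb_const[OF \<beta>b] ULu ULv ULi)
    using that by (auto dest: grp_mem)
  have sol0: "is_solution kt M Kmin Kmax p \<beta> \<alpha> i0 T u0 v0 i0f"
    unfolding sol_alt
  proof (intro ballI)
    fix m k t assume m: "m\<in>{1..M}" and k: "k \<in> grp kt m" and t: "t \<in> {0..T}"
    have kK: "k\<in>{Kmin..Kmax}" using grp_sub[OF m] k by auto
    show "(Fint u0 v0 i0f m k has_integral (i0f k t - i0)) {0..t}"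
    proof (rule hi_ulim[where f = "\<lambda>n s. Fint (uu (r n)) (vv (r n)) (ii (r n)) m k s" and I = "\<lambda>n. ii (r n) k t - i0"])
      show "\<And>n. ((\<lambda>s. Fint (uu (r n)) (vv (r n)) (ii (r n)) m k s) has_integral (ii (r n) k t - i0)) {0..t}"
        using sol m k t unfolding sol_alt by auto
      show "uniform_limit {0..t} (\<lambda>n s. Fint (uu (r n)) (vv (r n)) (ii (r n)) m k s) (Fint u0 v0 i0f m k) sequentially"
        by (rule ULb_subset[OF ULF[OF m k]]) (use t in auto)
      show "(\<lambda>n. ii (r n) k t - i0) \<longlonglongrightarrow> i0f k t - i0"
        by (intro tendsto_intros tendsto_uniform_limitI[OF Li[OF kK] t])
      show "0 \<le> t" using t by auto
    qed
  qed
  have ULbu: "ULb {0..T} (\<lambda>n s. b m (uu (r n) m s)) (\<lambda>s. b m (u0 m s))" if "m\<in>{1..M}" for m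
  proof (rule ULb_comp[OF Lu[OF that], of 0 umax])
    have "continuous_on {0..} (b m)" using bc that by auto
    then show "continuous_on {0..umax} (b m)" by (rule continuous_on_subset) auto
    show "\<And>n x. x \<in> {0..T} \<Longrightarrow> uu (r n) m x \<in> {0..umax}" using bu that unfolding bndc_def by auto
  qed
  have ULcv: "ULb {0..T} (\<lambda>n s. c m (vv (r n) m s)) (\<lambda>s. c m (v0 m s))" if "m\<in>{1..M}" for m
  proof (rule ULb_comp[OF Lv[OF that], of 0 vmax])
    have "continuous_on {0..} (c m)" using bc that by auto
    then show "continuous_on {0..vmax} (c m)" by (rule continuous_on_subset) auto
    show "\<And>n x. x \<in> {0..T} \<Longrightarrow> vv (r n) m x \<in> {0..vmax}" using bv that unfolding bndc_def by auto
  qed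
  have ULC: "ULb {0..T} (\<lambda>n s. cost (uu (r n)) (vv (r n)) (ii (r n)) s) (\<lambda>s. cost u0 v0 i0f s)"
    unfolding cost_def cost_integrand_def
    apply (intro ULb_add ULb_mult ULb_diff ULb_sum ULb_constc ULb_const[OF \<beta>b] ULu ULv ULi ULbu ULcv)
    by (auto dest: grp_mem)
  have cost0: "(cost u0 v0 i0f has_integral B) {0..T}"
  proof (rule hi_ulim[where f = "\<lambda>n s. cost (uu (r n)) (vv (r n)) (ii (r n)) s" and I = "\<lambda>n. B"])
    show "\<And>n. ((\<lambda>s. cost (uu (r n)) (vv (r n)) (ii (r n)) s) has_integral B) {0..T}"
      using costB by simp
    show "uniform_limit {0..T} (\<lambda>n s. cost (uu (r n)) (vv (r n)) (ii (r n)) s) (cost u0 v0 i0f) sequentially"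
      by (rule ULb_subset[OF ULC]) auto
    show "(\<lambda>n. B) \<longlonglongrightarrow> B" by simp
    show "0 \<le> T" using T by simp
  qed
  have C0: "u0 \<in> Ctrl T CP M umax"
    by (rule Ctrl_closed[of "\<lambda>n. uu (r n)"]) (use memb Lu in auto)
  have C1: "v0 \<in> Ctrl T CP M vmax"
    by (rule Ctrl_closed[of "\<lambda>n. vv (r n)"]) (use memb Lv in auto)
  have w0: "(u0, v0) \<in> Wset kt M Kmin Kmax p \<beta> \<alpha> i0 T B CP umax vmax b c"
    unfolding Wset_def using C0 C1 sol0 cost0 unfolding cost_def by auto
  show ?thesis
    using r w0 Lu Lv unfolding uu_def vv_def by (intro exI[of _ r] exI[of _ "(u0, v0)"]) auto
qed

end

theorem lemma3:

  fixes kt :: "nat \<Rightarrow> nat" and M Kmin Kmax :: nat and p :: "nat \<Rightarrow> real"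
    and T i0 B \<alpha> umax vmax \<beta>max :: real and \<beta> :: "real \<Rightarrow> real"
    and b c :: "nat \<Rightarrow> real \<Rightarrow> real" and CP :: "real \<Rightarrow> real"
  assumes M: "M \<ge> 1"
    and Kmin: "Kmin \<ge> 1"
    and kt0: "kt 0 = Kmin - 1" and ktM: "kt M = Kmax"
    and kt_mono: "strict_mono_on {0..M} kt"
    and p_nonneg: "\<forall>k\<in>{Kmin..Kmax}. p k \<ge> 0"
    and p_sum: "(\<Sum>k\<in>{Kmin..Kmax}. p k) = 1"
    and T: "T > 0" and i0: "0 \<le> i0" "i0 \<le> 1" and B: "B > 0"
    and \<alpha>: "0 < \<alpha>" "\<alpha> \<le> 1" and umax: "umax > 0" and vmax: "vmax \<ge> 0"
    and \<alpha>v: "\<alpha> * (1 + vmax) \<le> 1"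
    and \<beta>: "\<forall>t\<in>{0..T}. 0 \<le> \<beta> t \<and> \<beta> t \<le> \<beta>max"
    and bc: "\<forall>m\<in>{1..M}. continuous_on {0..} (b m) \<and> continuous_on {0..} (c m)
                \<and> mono_on {0..} (b m) \<and> mono_on {0..} (c m)
                \<and> (\<forall>x\<ge>0. b m x \<ge> 0 \<and> c m x \<ge> 0)"
    and CP: "\<forall>\<epsilon>>0. CP \<epsilon> \<ge> 0" "(CP \<longlongrightarrow> 0) (at_right 0)"
  shows "\<forall>w :: nat \<Rightarrow> (nat \<Rightarrow> real \<Rightarrow> real) \<times> (nat \<Rightarrow> real \<Rightarrow> real).
           (\<forall>n. w n \<in> Wset kt M Kmin Kmax p \<beta> \<alpha> i0 T B CP umax vmax b c) \<longrightarrow>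
           (\<exists>r w0. strict_mono r \<and> w0 \<in> Wset kt M Kmin Kmax p \<beta> \<alpha> i0 T B CP umax vmax b c \<and>
              (\<forall>m\<in>{1..M}.
                 uniform_limit {0..T} (\<lambda>n. fst (w (r n)) m) (fst w0 m) sequentially \<and>
                 uniform_limit {0..T} (\<lambda>n. snd (w (r n)) m) (snd w0 m) sequentially))"
proof -
  interpret prob kt M Kmin Kmax p \<beta> \<alpha> i0 T umax vmax \<beta>max
    by unfold_locales (use assms in auto)
  show ?thesis
  proof (intro allI impI)
    fix w :: "nat \<Rightarrow> (nat \<Rightarrow> real \<Rightarrow> real) \<times> (nat \<Rightarrow> real \<Rightarrow> real)"
    assume "\<forall>n. w n \<in> Wset kt M Kmin Kmax p \<beta> \<alpha> i0 T B CP umax vmax b c"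
    then show "\<exists>r w0. strict_mono r \<and> w0 \<in> Wset kt M Kmin Kmax p \<beta> \<alpha> i0 T B CP umax vmax b c \<and>
              (\<forall>m\<in>{1..M}.
                 uniform_limit {0..T} (\<lambda>n. fst (w (r n)) m) (fst w0 m) sequentially \<and>
                 uniform_limit {0..T} (\<lambda>n. snd (w (r n)) m) (snd w0 m) sequentially)"
      by (intro main) (use bc CP in auto)
  qed
qed

end
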